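(* Let $G$ be a finite simple connected graph with adjacency matrix $A$ having eigenvalues $\mu_1\ge\mu_2\ge\cdots\ge\mu_n$, and suppose $\mu_2(A)>0$. Let $g$ be the multiplicity of the smallest eigenvalue $\mu_n(A)$. Then \[ \chi_q(G)\ \ge\ 1+\min\left\{g,\ \frac{|\mu_n(A)|}{\mu_2(A)}\right\}. \]
   Context: A quantum $c$-coloring of a graph $G=(V,E)$ is a collection of orthogonal projectors $\{P_{v,k}: v\in V, k\in[c]\}$ in $\mathbb{C}^{d\times d}$, for some integer $d>0$, such that $\sum_{k\in[c]}P_{v,k}=I_d$ for every vertex $v\in V$, and $P_{v,k}P_{w,k}=0_d$ for every edge $vw\in E$ and every $k\in[c]$. The quantum chromatic number $\chi_q(G)$ is the smallest $c$ for which $G$ admits a quantum $c$-coloring in some dimension $d>0$. *)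

theory Defs
  imports "Jordan_Normal_Form.Schur_Decomposition"
begin

definition simple_graph :: "nat \<Rightarrow> (nat \<Rightarrow> nat \<Rightarrow> bool) \<Rightarrow> bool" where
  "simple_graph n E \<longleftrightarrow>
     (\<forall>u v. E u v \<longrightarrow> u < n \<and> v < n) \<and>
     (\<forall>u v. E u v \<longrightarrow> E v u) \<and> (\<forall>v. \<not> E v v)"

definition connected_graph :: "nat \<Rightarrow> (nat \<Rightarrow> nat \<Rightarrow> bool) \<Rightarrow> bool" where
  "connected_graph n E \<longleftrightarrow> n \<ge> 1 \<and> (\<forall>u<n. \<forall>v<n. E\<^sup>*\<^sup>* u v)"

definition adj_matrix :: "nat \<Rightarrow> (nat \<Rightarrow> nat \<Rightarrow> bool) \<Rightarrow> real mat" where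
  "adj_matrix n E = mat n n (\<lambda>(i,j). if E i j then 1 else 0)"

definition eigenvalue_list :: "real mat \<Rightarrow> real list" where
  "eigenvalue_list A = (THE mus. length mus = dim_row A \<and> sorted_wrt (\<ge>) mus \<and>
      char_poly A = prod_list (map (\<lambda>mu. [:- mu, 1:]) mus))"

definition orth_projector :: "nat \<Rightarrow> complex mat \<Rightarrow> bool" where
  "orth_projector d P \<longleftrightarrow> P \<in> carrier_mat d d \<and> P * P = P \<and> mat_adjoint P = P"

definition quantum_coloring ::
  "nat \<Rightarrow> (nat \<Rightarrow> nat \<Rightarrow> bool) \<Rightarrow> nat \<Rightarrow> nat \<Rightarrow> (nat \<Rightarrow> nat \<Rightarrow> complex mat) \<Rightarrow> bool" where
  "quantum_coloring n E c d P \<longleftrightarrow>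
     (\<forall>v<n. \<forall>k<c. orth_projector d (P v k)) \<and>
     (\<forall>v<n. \<forall>i<d. \<forall>j<d. (\<Sum>k<c. P v k $$ (i,j)) = (if i = j then 1 else 0)) \<and>
     (\<forall>v w k. E v w \<longrightarrow> k < c \<longrightarrow> P v k * P w k = 0\<^sub>m d d)"

definition quantum_colorable :: "nat \<Rightarrow> (nat \<Rightarrow> nat \<Rightarrow> bool) \<Rightarrow> nat \<Rightarrow> bool" where
  "quantum_colorable n E c \<longleftrightarrow> (\<exists>d>0. \<exists>P. quantum_coloring n E c d P)"

definition quantum_chromatic_number :: "nat \<Rightarrow> (nat \<Rightarrow> nat \<Rightarrow> bool) \<Rightarrow> nat" where
  "quantum_chromatic_number n E = (LEAST c. quantum_colorable n E c)"

end

theory Submission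
  imports Defs "HOL-Combinatorics.List_Permutation"
begin


lemma homog_system_nonzero:
  fixes M :: "'j \<Rightarrow> 'i \<Rightarrow> 'a::field"
  assumes "finite I" "finite J" "card J < card I"
  shows "\<exists>\<alpha>. (\<exists>i\<in>I. \<alpha> i \<noteq> 0) \<and> (\<forall>j\<in>J. (\<Sum>i\<in>I. M j i * \<alpha> i) = 0)"
  using assms
proof (induction "card J" arbitrary: J I M)
  case 0
  then have "J = {}" by auto
  from 0 obtain i0 where "i0 \<in> I" by (metis card.empty card_ge_0_finite ex_in_conv less_irrefl_nat)
  then show ?case using \<open>J = {}\<close> by (intro exI[of _ "\<lambda>i. if i = i0 then 1 else 0"]) auto
next
  case (Suc k)
  then obtain j0 where j0: "j0 \<in> J" by (metis card.empty ex_in_conv nat.distinct(1))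
  define J' where "J' = J - {j0}"
  have cJ': "card J' = k" using Suc j0 by (simp add: J'_def)
  have fJ': "finite J'" using Suc by (simp add: J'_def)
  show ?case
  proof (cases "\<forall>i\<in>I. M j0 i = 0")
    case True
    from Suc.hyps(1)[OF cJ'[symmetric] Suc.prems(1) fJ'] cJ' Suc.prems(3) Suc.hyps(2)
    obtain \<alpha> where a: "(\<exists>i\<in>I. \<alpha> i \<noteq> 0)" "\<forall>j\<in>J'. (\<Sum>i\<in>I. M j i * \<alpha> i) = 0"
      by (metis Suc_lessD)
    show ?thesis using a True by (intro exI[of _ \<alpha>]) (auto simp: J'_def)
  next
    case False
    then obtain i0 where i0: "i0 \<in> I" "M j0 i0 \<noteq> 0" by auto
    define I' where "I' = I - {i0}"
    define M' where "M' = (\<lambda>j i. M j i - M j i0 * M j0 i / M j0 i0)"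
    have cI': "card I' = card I - 1" using i0 Suc by (simp add: I'_def)
    have fI': "finite I'" using Suc by (simp add: I'_def)
    have "card J' < card I'" using cI' cJ' Suc by linarith
    from Suc.hyps(1)[OF cJ'[symmetric] fI' fJ' this, of M']
    obtain \<beta> where b: "\<exists>i\<in>I'. \<beta> i \<noteq> 0" "\<forall>j\<in>J'. (\<Sum>i\<in>I'. M' j i * \<beta> i) = 0" by blast
    define \<alpha> where "\<alpha> = (\<lambda>i. if i = i0 then - (\<Sum>i\<in>I'. M j0 i * \<beta> i) / M j0 i0 else \<beta> i)"
    have sumI: "(\<Sum>i\<in>I. f i) = f i0 + (\<Sum>i\<in>I'. f i)" for f :: "_ \<Rightarrow> 'a"
      using Suc.prems(1) i0(1) unfolding I'_def by (rule sum.remove)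
    have aI': "(\<Sum>i\<in>I'. g i * \<alpha> i) = (\<Sum>i\<in>I'. g i * \<beta> i)" for g
      by (rule sum.cong) (auto simp: \<alpha>_def I'_def)
    have a0: "\<alpha> i0 = - (\<Sum>i\<in>I'. M j0 i * \<beta> i) / M j0 i0" by (simp add: \<alpha>_def)
    have "\<forall>j\<in>J. (\<Sum>i\<in>I. M j i * \<alpha> i) = 0"
    proof
      fix j assume j: "j \<in> J"
      show "(\<Sum>i\<in>I. M j i * \<alpha> i) = 0"
      proof (cases "j = j0")
        case True
        then show ?thesis using i0 by (simp add: sumI aI' a0)
      next
        case False
        then have "j \<in> J'" using j by (simp add: J'_def)
        then have "(\<Sum>i\<in>I'. M' j i * \<beta> i) = 0" using b by auto
        moreover have "(\<Sum>i\<in>I'. M' j i * \<beta> i) = (\<Sum>i\<in>I'. M j i * \<beta> i) - M j i0 / M j0 i0 * (\<Sum>i\<in>I'. M j0 i * \<beta> i)"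
          by (simp add: M'_def sum_subtractf sum_distrib_left algebra_simps)
        moreover have "(\<Sum>i\<in>I. M j i * \<alpha> i) = M j i0 * \<alpha> i0 + (\<Sum>i\<in>I'. M j i * \<beta> i)"
          by (simp add: sumI aI')
        ultimately show ?thesis using i0 by (simp add: a0 field_simps)
      qed
    qed
    moreover have "\<exists>i\<in>I. \<alpha> i \<noteq> 0" using b by (auto simp: \<alpha>_def I'_def)
    ultimately show ?thesis by blast
  qed
qed



lemma hermitian_eval_real:
  fixes A :: "nat \<Rightarrow> nat \<Rightarrow> real" and z :: "nat \<Rightarrow> complex"
  assumes sym: "\<forall>i<n. \<forall>j<n. A i j = A j i"
    and ev: "\<forall>i<n. (\<Sum>j<n. of_real (A i j) * z j) = e * z i"
    and nz: "\<exists>i<n. z i \<noteq> 0"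
  shows "Im e = 0"
proof -
  define S where "S = (\<Sum>i<n. cnj (z i) * (\<Sum>j<n. of_real (A i j) * z j))"
  have "S = (\<Sum>i<n. cnj (z i) * (e * z i))"
    unfolding S_def using ev by (intro sum.cong refl) auto
  also have "\<dots> = (\<Sum>i<n. e * complex_of_real ((cmod (z i))^2))"
    by (intro sum.cong refl) (subst complex_norm_square, simp add: algebra_simps)
  also have "\<dots> = e * of_real (\<Sum>i<n. (cmod (z i))^2)"
    by (simp add: sum_distrib_left)
  finally have S1: "S = e * of_real (\<Sum>i<n. (cmod (z i))^2)" .
  have "cnj S = (\<Sum>i<n. z i * (\<Sum>j<n. of_real (A i j) * cnj (z j)))"
    unfolding S_def by simp
  also have "\<dots> = (\<Sum>i<n. \<Sum>j<n. of_real (A i j) * (z i * cnj (z j)))"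
    by (simp add: sum_distrib_left algebra_simps)
  also have "\<dots> = (\<Sum>j<n. \<Sum>i<n. of_real (A i j) * (z i * cnj (z j)))"
    by (rule sum.swap)
  also have "\<dots> = (\<Sum>j<n. \<Sum>i<n. of_real (A j i) * (z i * cnj (z j)))"
    using sym by (intro sum.cong refl) auto
  also have "\<dots> = S"
    unfolding S_def by (simp add: sum_distrib_left algebra_simps)
  finally have "cnj S = S" .
  then have "Im (cnj S) = Im S" by simp
  then have "Im S = 0" by simp
  moreover have pos: "(\<Sum>i<n. (cmod (z i))^2) > 0"
  proof -
    from nz obtain i where "i < n" "z i \<noteq> 0" by auto
    then have "(cmod (z i))^2 > 0" by simp
    moreover have "(cmod (z i))^2 \<le> (\<Sum>i<n. (cmod (z i))^2)"
      using \<open>i < n\<close> by (intro member_le_sum) auto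
    ultimately show ?thesis by linarith
  qed
  moreover have "Im S = Im e * (\<Sum>i<n. (cmod (z i))^2)"
    unfolding S1 by simp
  ultimately show ?thesis by (metis mult_eq_0_iff order_less_irrefl)
qed

lemma real_sym_eigen_fun:
  fixes A :: "nat \<Rightarrow> nat \<Rightarrow> real"
  assumes sym: "\<forall>i<n. \<forall>j<n. A i j = A j i" and n: "n > 0"
  shows "\<exists>e x. (\<exists>i<n. x i \<noteq> 0) \<and> (\<forall>i<n. (\<Sum>j<n. A i j * x j) = e * x i)"
proof -
  define M where "M = mat n n (\<lambda>(i,j). complex_of_real (A i j))"
  have M: "M \<in> carrier_mat n n" by (simp add: M_def)
  from char_poly_factorized[OF M] obtain as where
    cp: "char_poly M = (\<Prod>a\<leftarrow>as. [:- a, 1:])" and len: "length as = n" by auto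
  from len n obtain e where "e \<in> set as" by (cases as) auto
  then have "poly (char_poly M) e = 0" unfolding cp
    by (simp add: poly_prod_list_zero_iff)
  then have "eigenvalue M e" using eigenvalue_root_char_poly[OF M] by simp
  from find_eigenvector[OF M this] obtain v where "eigenvector M v e" by blast
  then have v: "v \<in> carrier_vec n" "v \<noteq> 0\<^sub>v n" "M *\<^sub>v v = e \<cdot>\<^sub>v v"
    unfolding eigenvector_def using M by auto
  define z where "z = (\<lambda>i. v $ i)"
  have ev: "\<forall>i<n. (\<Sum>j<n. of_real (A i j) * z j) = e * z i"
  proof (intro allI impI)
    fix i assume i: "i < n"
    have "(M *\<^sub>v v) $ i = (e \<cdot>\<^sub>v v) $ i" using v by simp
    then show "(\<Sum>j<n. of_real (A i j) * z j) = e * z i"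
      using i v(1) by (simp add: M_def z_def scalar_prod_def row_def atLeast0LessThan)
  qed
  have nz: "\<exists>i<n. z i \<noteq> 0"
  proof (rule ccontr)
    assume "\<not> ?thesis"
    then have "v = 0\<^sub>v n" using v(1) by (intro eq_vecI) (auto simp: z_def)
    with v(2) show False by simp
  qed
  have im: "Im e = 0" by (rule hermitian_eval_real[OF sym ev nz])
  have reev: "\<forall>i<n. (\<Sum>j<n. A i j * Re (z j)) = Re e * Re (z i)"
  proof (intro allI impI)
    fix i assume "i < n"
    then have "Re (\<Sum>j<n. of_real (A i j) * z j) = Re (e * z i)" using ev by simp
    then show "(\<Sum>j<n. A i j * Re (z j)) = Re e * Re (z i)" using im by (simp add: Re_sum)
  qed
  have imev: "\<forall>i<n. (\<Sum>j<n. A i j * Im (z j)) = Re e * Im (z i)"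
  proof (intro allI impI)
    fix i assume "i < n"
    then have "Im (\<Sum>j<n. of_real (A i j) * z j) = Im (e * z i)" using ev by simp
    then show "(\<Sum>j<n. A i j * Im (z j)) = Re e * Im (z i)" using im by (simp add: Im_sum)
  qed
  from nz obtain i where i: "i < n" "z i \<noteq> 0" by auto
  show ?thesis
  proof (cases "Re (z i) = 0")
    case True
    then have "Im (z i) \<noteq> 0" using i(2) True by (auto simp: complex_eq_iff)
    then show ?thesis using imev i(1) by (intro exI[of _ "Re e"] exI[of _ "\<lambda>j. Im (z j)"]) auto
  next
    case False
    then show ?thesis using reev i(1) by (intro exI[of _ "Re e"] exI[of _ "\<lambda>j. Re (z j)"]) auto
  qed
qed



definition orthon :: "nat \<Rightarrow> nat \<Rightarrow> (nat \<Rightarrow> nat \<Rightarrow> real) \<Rightarrow> bool" where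
  "orthon n m W \<longleftrightarrow> (\<forall>k<m. \<forall>l<m. (\<Sum>v<n. W v k * W v l) = (if k = l then 1 else 0))"

lemma orthon_addcol:
  assumes "orthon n m W" "(\<Sum>v<n. x v * x v) = 1" "\<forall>k<m. (\<Sum>v<n. W v k * x v) = 0"
  shows "orthon n (Suc m) (\<lambda>v k. if k = m then x v else W v k)"
  unfolding orthon_def
proof (intro allI impI)
  fix k l assume k: "k < Suc m" and l: "l < Suc m"
  show "(\<Sum>v<n. (if k = m then x v else W v k) * (if l = m then x v else W v l)) = (if k = l then 1 else 0)"
  proof (cases "k = m")
    case True
    show ?thesis
    proof (cases "l = m")
      case True
      then show ?thesis using \<open>k = m\<close> assms(2) by simp
    next
      case False
      then have "l < m" using l by simp
      then have "(\<Sum>v<n. x v * W v l) = 0" using assms(3) by (simp add: mult.commute)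
      then show ?thesis using \<open>k = m\<close> False by simp
    qed
  next
    case False
    then have km: "k < m" using k by simp
    show ?thesis
    proof (cases "l = m")
      case True
      then show ?thesis using False km assms(3) by simp
    next
      case False
      then have "l < m" using l by simp
      then show ?thesis using km \<open>k \<noteq> m\<close> False assms(1) unfolding orthon_def by simp
    qed
  qed
qed

lemma orthon_extend:
  assumes "orthon n m W" "m < n"
  shows "\<exists>x. (\<Sum>v<n. x v * x v) = 1 \<and> (\<forall>k<m. (\<Sum>v<n. W v k * x v) = 0)"
proof -
  from homog_system_nonzero[of "{..<n}" "{..<m}" "\<lambda>k v. W v k"] assms(2)
  obtain \<alpha> :: "nat \<Rightarrow> real" where a: "\<exists>i\<in>{..<n}. \<alpha> i \<noteq> 0" "\<forall>k\<in>{..<m}. (\<Sum>v<n. W v k * \<alpha> v) = 0"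
    by auto
  define s where "s = (\<Sum>v<n. \<alpha> v * \<alpha> v)"
  have s: "s > 0"
  proof -
    from a(1) obtain i where i: "i < n" "\<alpha> i \<noteq> 0" by auto
    have "\<alpha> i * \<alpha> i \<le> s" unfolding s_def using i by (intro member_le_sum) auto
    moreover have "\<alpha> i * \<alpha> i > 0" using i(2) by (metis not_real_square_gt_zero)
    ultimately show ?thesis by linarith
  qed
  define x where "x = (\<lambda>v. \<alpha> v / sqrt s)"
  have "(\<Sum>v<n. x v * x v) = (\<Sum>v<n. \<alpha> v * \<alpha> v) / s"
    unfolding x_def using s by (simp add: sum_divide_distrib)
  also have "\<dots> = 1" using s unfolding s_def by simp
  finally have 1: "(\<Sum>v<n. x v * x v) = 1" .
  have 2: "\<forall>k<m. (\<Sum>v<n. W v k * x v) = 0"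
  proof (intro allI impI)
    fix k assume "k < m"
    have "(\<Sum>v<n. W v k * x v) = (\<Sum>v<n. W v k * \<alpha> v) / sqrt s"
      unfolding x_def by (simp add: sum_divide_distrib)
    then show "(\<Sum>v<n. W v k * x v) = 0" using a(2) \<open>k < m\<close> by simp
  qed
  from 1 2 show ?thesis by blast
qed

lemma orthon_basis:
  assumes "n > 0" "(\<Sum>v<n. x0 v * x0 v) = 1"
  shows "\<exists>W. orthon n n W \<and> (\<forall>v. W v 0 = x0 v)"
proof -
  have "\<exists>W. orthon n (Suc k) W \<and> (\<forall>v. W v 0 = x0 v)" if "k < n" for k
    using that
  proof (induction k)
    case 0
    have "orthon n 1 (\<lambda>v k. x0 v)" unfolding orthon_def using assms(2) by simp
    then show ?case by (intro exI[of _ "\<lambda>v k. x0 v"]) simp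
  next
    case (Suc m)
    then obtain W where W: "orthon n (Suc m) W" "\<forall>v. W v 0 = x0 v" by auto
    from orthon_extend[OF W(1)] Suc.prems obtain x where
      x: "(\<Sum>v<n. x v * x v) = 1" "\<forall>k<Suc m. (\<Sum>v<n. W v k * x v) = 0" by auto
    have "orthon n (Suc (Suc m)) (\<lambda>v k. if k = Suc m then x v else W v k)"
      by (rule orthon_addcol[OF W(1) x])
    moreover have "\<forall>v. (\<lambda>v k. if k = Suc m then x v else W v k) v 0 = x0 v"
      using W(2) by simp
    ultimately show ?case by (intro exI[of _ "\<lambda>v k. if k = Suc m then x v else W v k"]) simp
  qed
  from this[of "n - 1"] show ?thesis using assms(1) by simp
qed

lemma orthon_mat:
  assumes "orthon n n W"
  shows "transpose_mat (mat n n (\<lambda>(i,j). W i j)) * mat n n (\<lambda>(i,j). W i j) = 1\<^sub>m n"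
  using assms by (intro eq_matI) (auto simp: orthon_def scalar_prod_def atLeast0LessThan)

lemma spectral_real:
  fixes A :: "real mat"
  assumes "A \<in> carrier_mat n n" "transpose_mat A = A"
  shows "\<exists>U D. U \<in> carrier_mat n n \<and> D \<in> carrier_mat n n \<and> diagonal_mat D \<and>
    transpose_mat U * U = 1\<^sub>m n \<and> U * transpose_mat U = 1\<^sub>m n \<and> A = U * D * transpose_mat U"
  using assms
proof (induction n arbitrary: A)
  case 0
  then show ?case
    by (intro exI[of _ "1\<^sub>m 0"] exI[of _ A]) (auto simp: diagonal_mat_def)
next
  case (Suc m)
  define n where "n = Suc m"
  have A: "A \<in> carrier_mat n n" using Suc.prems n_def by simp
  have symA: "\<forall>i<n. \<forall>j<n. A $$ (i,j) = A $$ (j,i)"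
  proof (intro allI impI)
    fix i j assume "i < n" "j < n"
    then have "transpose_mat A $$ (i,j) = A $$ (j,i)" using A by simp
    then show "A $$ (i,j) = A $$ (j,i)" using Suc.prems(2) by simp
  qed
  obtain e x where ex: "\<exists>i<n. x i \<noteq> 0" "\<forall>i<n. (\<Sum>j<n. A $$ (i,j) * x j) = e * x i"
    using real_sym_eigen_fun[of n "\<lambda>i j. A $$ (i,j)"] symA n_def by auto
  define s where "s = (\<Sum>v<n. x v * x v)"
  have s: "s > 0"
  proof -
    from ex(1) obtain i where i: "i < n" "x i \<noteq> 0" by auto
    have "x i * x i \<le> s" unfolding s_def using i by (intro member_le_sum) auto
    moreover have "x i * x i > 0" using i(2) by (metis not_real_square_gt_zero)
    ultimately show ?thesis by linarith
  qed
  define x0 where "x0 = (\<lambda>v. x v / sqrt s)"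
  have "(\<Sum>v<n. x0 v * x0 v) = (\<Sum>v<n. x v * x v) / s"
    unfolding x0_def using s by (simp add: sum_divide_distrib)
  then have x0u: "(\<Sum>v<n. x0 v * x0 v) = 1" using s unfolding s_def by simp
  have x0e: "\<forall>i<n. (\<Sum>j<n. A $$ (i,j) * x0 j) = e * x0 i"
  proof (intro allI impI)
    fix i assume "i < n"
    have "(\<Sum>j<n. A $$ (i,j) * x0 j) = (\<Sum>j<n. A $$ (i,j) * x j) / sqrt s"
      unfolding x0_def by (simp add: sum_divide_distrib)
    then show "(\<Sum>j<n. A $$ (i,j) * x0 j) = e * x0 i" using ex(2) \<open>i < n\<close> by (simp add: x0_def)
  qed
  obtain W where W: "orthon n n W" "\<forall>v. W v 0 = x0 v"
    using orthon_basis[OF _ x0u] n_def by auto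
  define Wm where "Wm = mat n n (\<lambda>(i,j). W i j)"
  have Wm: "Wm \<in> carrier_mat n n" by (simp add: Wm_def)
  have WtW: "transpose_mat Wm * Wm = 1\<^sub>m n" unfolding Wm_def by (rule orthon_mat[OF W(1)])
  have WWt: "Wm * transpose_mat Wm = 1\<^sub>m n"
    by (rule mat_mult_left_right_inverse[OF _ Wm WtW]) (simp add: Wm)
  define A' where "A' = transpose_mat Wm * A * Wm"
  have A': "A' \<in> carrier_mat n n" unfolding A'_def using Wm A by auto
  have colAW: "col (A * Wm) 0 = e \<cdot>\<^sub>v col Wm 0"
  proof (rule eq_vecI)
    fix i assume "i < dim_vec (e \<cdot>\<^sub>v col Wm 0)"
    then have i: "i < n" using Wm by simp
    have "col (A * Wm) 0 $ i = (\<Sum>j<n. A $$ (i,j) * x0 j)"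
      using i A Wm W(2) n_def by (simp add: Wm_def scalar_prod_def atLeast0LessThan)
    then show "col (A * Wm) 0 $ i = (e \<cdot>\<^sub>v col Wm 0) $ i"
      using x0e i W(2) n_def by (simp add: Wm_def)
  qed (use A Wm in simp)
  have A'0: "\<forall>i<n. A' $$ (i,0) = (if i = 0 then e else 0)"
  proof (intro allI impI)
    fix i assume i: "i < n"
    have "A' = transpose_mat Wm * (A * Wm)" unfolding A'_def using A Wm by (simp add: assoc_mult_mat)
    then have "A' $$ (i,0) = row (transpose_mat Wm) i \<bullet> col (A * Wm) 0"
      using i A Wm n_def by simp
    also have "\<dots> = e * (row (transpose_mat Wm) i \<bullet> col Wm 0)"
      unfolding colAW using Wm i by simp
    also have "row (transpose_mat Wm) i \<bullet> col Wm 0 = (transpose_mat Wm * Wm) $$ (i,0)"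
      using Wm i n_def by simp
    finally show "A' $$ (i,0) = (if i = 0 then e else 0)" using WtW i n_def by simp
  qed
  have symA': "transpose_mat A' = A'"
  proof -
    have c1: "transpose_mat Wm * A \<in> carrier_mat n n" using Wm A by simp
    have "transpose_mat A' = transpose_mat Wm * transpose_mat (transpose_mat Wm * A)"
      unfolding A'_def by (rule transpose_mult[OF c1 Wm])
    also have "transpose_mat (transpose_mat Wm * A) = transpose_mat A * Wm"
      using transpose_mult[of "transpose_mat Wm" n n A n] Wm A by simp
    finally show ?thesis using Suc.prems(2) Wm A unfolding A'_def by (simp add: assoc_mult_mat[of _ n n _ n _ n])
  qed
  have A'0': "\<forall>j<n. A' $$ (0,j) = (if j = 0 then e else 0)"
  proof (intro allI impI)
    fix j assume j: "j < n"
    have "A' $$ (0,j) = transpose_mat A' $$ (j,0)" using A' j n_def by simp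
    then show "A' $$ (0,j) = (if j = 0 then e else 0)" using symA' A'0 j by simp
  qed
  define A3 where "A3 = mat m m (\<lambda>(i,j). A' $$ (Suc i, Suc j))"
  have A3: "A3 \<in> carrier_mat m m" by (simp add: A3_def)
  have symA3: "transpose_mat A3 = A3"
  proof (rule eq_matI)
    fix i j assume "i < dim_row A3" "j < dim_col A3"
    then have ij: "i < m" "j < m" by (auto simp: A3_def)
    have "A' $$ (Suc j, Suc i) = transpose_mat A' $$ (Suc i, Suc j)"
      using A' ij n_def by simp
    then show "transpose_mat A3 $$ (i,j) = A3 $$ (i,j)" using ij symA' by (simp add: A3_def)
  qed (auto simp: A3_def)
  from Suc.IH[OF A3 symA3] obtain U3 D3 where U3: "U3 \<in> carrier_mat m m" "D3 \<in> carrier_mat m m"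
    "diagonal_mat D3" "transpose_mat U3 * U3 = 1\<^sub>m m" "U3 * transpose_mat U3 = 1\<^sub>m m"
    "A3 = U3 * D3 * transpose_mat U3" by blast
  define E1 :: "real mat" where "E1 = mat 1 1 (\<lambda>_. e)"
  have E1: "E1 \<in> carrier_mat 1 1" by (simp add: E1_def)
  define B where "B = four_block_mat (1\<^sub>m 1) (0\<^sub>m 1 m) (0\<^sub>m m 1) U3"
  define D where "D = four_block_mat E1 (0\<^sub>m 1 m) (0\<^sub>m m 1) D3"
  have B: "B \<in> carrier_mat n n" unfolding B_def n_def using U3 by auto
  have D: "D \<in> carrier_mat n n" unfolding D_def n_def using U3 E1 by auto
  have Bt: "transpose_mat B = four_block_mat (1\<^sub>m 1) (0\<^sub>m 1 m) (0\<^sub>m m 1) (transpose_mat U3)"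
    unfolding B_def using U3 by (subst transpose_four_block_mat[of _ 1 1 _ m _ m]) auto
  have A'blk: "A' = four_block_mat E1 (0\<^sub>m 1 m) (0\<^sub>m m 1) A3"
  proof (rule eq_matI)
    fix i j assume "i < dim_row (four_block_mat E1 (0\<^sub>m 1 m) (0\<^sub>m m 1) A3)"
      "j < dim_col (four_block_mat E1 (0\<^sub>m 1 m) (0\<^sub>m m 1) A3)"
    then have ij: "i < n" "j < n" using E1 A3 n_def by auto
    show "A' $$ (i,j) = four_block_mat E1 (0\<^sub>m 1 m) (0\<^sub>m m 1) A3 $$ (i,j)"
    proof (cases "i = 0")
      case True
      then show ?thesis using ij A'0' E1 A3 n_def by (simp add: E1_def)
    next
      case False
      note i0 = this
      show ?thesis
      proof (cases "j = 0")
        case True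
        then show ?thesis using ij A'0 i0 E1 A3 n_def by (simp add: E1_def)
      next
        case False
        then obtain i' j' where "i = Suc i'" "j = Suc j'" using i0 by (metis not0_implies_Suc)
        then show ?thesis using ij E1 A3 n_def by (simp add: A3_def)
      qed
    qed
  qed (use A' E1 A3 n_def in auto)
  have BDBt: "B * D * transpose_mat B = A'"
  proof -
    have U3t: "transpose_mat U3 \<in> carrier_mat m m" using U3 by simp
    have UD3: "U3 * D3 \<in> carrier_mat m m" using U3 by simp
    have BD: "B * D = four_block_mat E1 (0\<^sub>m 1 m) (0\<^sub>m m 1) (U3 * D3)"
      unfolding B_def D_def using U3 E1
      by (subst mult_four_block_mat[OF one_carrier_mat zero_carrier_mat zero_carrier_mat U3(1) E1 zero_carrier_mat zero_carrier_mat U3(2)]) auto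
    have "B * D * transpose_mat B = four_block_mat E1 (0\<^sub>m 1 m) (0\<^sub>m m 1) (U3 * D3 * transpose_mat U3)"
      unfolding Bt BD using U3 E1
      by (subst mult_four_block_mat[OF E1 zero_carrier_mat zero_carrier_mat UD3 one_carrier_mat zero_carrier_mat zero_carrier_mat U3t]) auto
    then show ?thesis using A'blk U3(6) by simp
  qed
  define U where "U = Wm * B"
  have U: "U \<in> carrier_mat n n" unfolding U_def using Wm B by simp
  have UtU: "transpose_mat U * U = 1\<^sub>m n"
  proof -
    have "transpose_mat U * U = transpose_mat B * (transpose_mat Wm * Wm) * B"
      unfolding U_def using Wm B by (simp add: transpose_mult[of _ n n] assoc_mult_mat[of _ n n _ n _ n])
    also have "\<dots> = transpose_mat B * B" using WtW B by simp
    also have "\<dots> = four_block_mat (1\<^sub>m 1) (0\<^sub>m 1 m) (0\<^sub>m m 1) (transpose_mat U3 * U3)"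
      unfolding Bt unfolding B_def using U3
      by (subst mult_four_block_mat[OF one_carrier_mat zero_carrier_mat zero_carrier_mat transpose_carrier_mat[THEN iffD2, OF U3(1)] one_carrier_mat zero_carrier_mat zero_carrier_mat U3(1)]) auto
    also have "\<dots> = 1\<^sub>m n" using U3(4) n_def by simp
    finally show ?thesis .
  qed
  have UUt: "U * transpose_mat U = 1\<^sub>m n"
    by (rule mat_mult_left_right_inverse[OF _ U UtU]) (simp add: U)
  have "U * D * transpose_mat U = Wm * (B * D * transpose_mat B) * transpose_mat Wm"
    unfolding U_def using Wm B D by (simp add: transpose_mult[of _ n n] assoc_mult_mat[of _ n n _ n _ n])
  also have "\<dots> = Wm * A' * transpose_mat Wm" using BDBt by simp
  also have "\<dots> = (Wm * transpose_mat Wm) * A * (Wm * transpose_mat Wm)"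
    unfolding A'_def using Wm A by (simp add: assoc_mult_mat[of _ n n _ n _ n])
  also have "\<dots> = A" using WWt A by simp
  finally have AUDU: "A = U * D * transpose_mat U" by simp
  have diagD: "diagonal_mat D"
    unfolding diagonal_mat_def
  proof (intro allI impI)
    fix i j assume ij: "i < dim_row D" "j < dim_col D" "i \<noteq> j"
    then have ij': "i < 1 + m" "j < 1 + m" using D n_def by auto
    show "D $$ (i,j) = 0"
      using ij' ij(3) U3(2,3) E1 unfolding D_def diagonal_mat_def by auto
  qed
  show ?case using U D diagD UtU UUt AUDU n_def by blast
qed



lemma prod_list_mset_cong:
  fixes f :: "'a \<Rightarrow> 'b::comm_monoid_mult"
  assumes "mset xs = mset ys"
  shows "prod_list (map f xs) = prod_list (map f ys)"
proof -
  have "prod_list (map f xs) = prod_mset (mset (map f xs))" by (rule prod_mset_prod_list[symmetric])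
  also have "\<dots> = prod_mset (image_mset f (mset xs))" by (simp only: mset_map)
  also have "\<dots> = prod_mset (image_mset f (mset ys))" using assms by simp
  also have "\<dots> = prod_mset (mset (map f ys))" by (simp only: mset_map)
  also have "\<dots> = prod_list (map f ys)" by (rule prod_mset_prod_list)
  finally show ?thesis .
qed

lemma linear_prod_mset_eq:
  fixes xs ys :: "real list"
  assumes "(\<Prod>a\<leftarrow>xs. [:- a, 1:]) = (\<Prod>a\<leftarrow>ys. [:- a, 1:])"
  shows "mset xs = mset ys"
  using assms
proof (induction xs arbitrary: ys)
  case Nil
  show ?case
  proof (cases ys)
    case Nil then show ?thesis by simp
  next
    case (Cons y ys')
    have "poly (\<Prod>a\<leftarrow>ys. [:- a, 1:]) y = 0" using Cons by simp
    then have "poly (1 :: real poly) y = 0" using Nil.prems by simp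
    then show ?thesis by simp
  qed
next
  case (Cons x xs)
  have "poly (\<Prod>a\<leftarrow>x # xs. [:- a, 1:]) x = 0" by simp
  then have "poly (\<Prod>a\<leftarrow>ys. [:- a, 1:]) x = 0" by (simp only: Cons.prems)
  then have x: "x \<in> set ys" by (auto simp: poly_prod_list_zero_iff)
  then have my: "mset ys = mset (x # remove1 x ys)" by simp
  have "(\<Prod>a\<leftarrow>ys. [:- a, 1:]) = (\<Prod>a\<leftarrow>x # remove1 x ys. [:- a, 1:])"
    by (rule prod_list_mset_cong[OF my])
  also have "\<dots> = [:- x, 1:] * (\<Prod>a\<leftarrow>remove1 x ys. [:- a, 1:])"
    by (simp only: list.map prod_list.Cons)
  finally have e1: "(\<Prod>a\<leftarrow>ys. [:- a, 1:]) = [:- x, 1:] * (\<Prod>a\<leftarrow>remove1 x ys. [:- a, 1:])" .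
  have "[:- x, 1:] * (\<Prod>a\<leftarrow>xs. [:- a, 1:]) = (\<Prod>a\<leftarrow>x # xs. [:- a, 1:])"
    by (simp only: list.map prod_list.Cons)
  also have "\<dots> = [:- x, 1:] * (\<Prod>a\<leftarrow>remove1 x ys. [:- a, 1:])"
    using Cons.prems e1 by (simp only:)
  finally have e2: "[:- x, 1:] * (\<Prod>a\<leftarrow>xs. [:- a, 1:]) = [:- x, 1:] * (\<Prod>a\<leftarrow>remove1 x ys. [:- a, 1:])" .
  have nz: "[:- x, 1:] \<noteq> (0 :: real poly)" by simp
  from e2 have "(\<Prod>a\<leftarrow>xs. [:- a, 1:]) = (\<Prod>a\<leftarrow>remove1 x ys. [:- a, 1:])"
    by (simp only: mult_left_cancel[OF nz])
  from Cons.IH[OF this] have h: "mset xs = mset (remove1 x ys)" .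
  have "mset (x # xs) = mset (x # remove1 x ys)" by (simp only: mset.simps h)
  then show ?case using my by (simp only:)
qed

lemma eigenvalue_list_eq:
  fixes A :: "real mat" and ls :: "real list"
  assumes A: "A \<in> carrier_mat n n" and cp: "char_poly A = (\<Prod>a\<leftarrow>ls. [:- a, 1:])"
    and len: "length ls = n"
  shows "eigenvalue_list A = rev (sort ls)"
proof -
  let ?P = "\<lambda>mus. length mus = dim_row A \<and> sorted_wrt (\<ge>) mus \<and>
      char_poly A = prod_list (map (\<lambda>mu. [:- mu, 1:]) mus)"
  have ex: "?P (rev (sort ls))"
  proof (intro conjI)
    show "length (rev (sort ls)) = dim_row A" using A len by simp
    show "sorted_wrt (\<ge>) (rev (sort ls))" by (simp add: sorted_wrt_rev)
    have "mset ls = mset (rev (sort ls))" by simp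
    then show "char_poly A = prod_list (map (\<lambda>mu. [:- mu, 1:]) (rev (sort ls)))"
      unfolding cp by (rule prod_list_mset_cong)
  qed
  have un: "mus = rev (sort ls)" if "?P mus" for mus
  proof -
    from that have "(\<Prod>a\<leftarrow>mus. [:- a, 1:]) = (\<Prod>a\<leftarrow>ls. [:- a, 1:])" using cp by simp
    then have m: "mset mus = mset ls" by (rule linear_prod_mset_eq)
    have s2: "sorted (rev mus)" using that by (simp add: sorted_wrt_rev)
    have m2: "mset (rev mus) = mset ls" using m by simp
    have "sort ls = rev mus" by (rule properties_for_sort[OF m2 s2])
    then show ?thesis by simp
  qed
  show ?thesis unfolding eigenvalue_list_def
    by (rule the_equality[where P = ?P, OF ex un])
qed

lemma sorted_spectral:
  fixes A :: "real mat"
  assumes A: "A \<in> carrier_mat n n" and sym: "transpose_mat A = A"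
  shows "\<exists>U. orthon n n U \<and> (\<forall>v<n. \<forall>w<n. (\<Sum>k<n. U v k * U w k) = (if v = w then 1 else 0)) \<and>
    (\<forall>v<n. \<forall>w<n. A $$ (v,w) = (\<Sum>k<n. U v k * eigenvalue_list A ! k * U w k)) \<and>
    length (eigenvalue_list A) = n \<and> sorted_wrt (\<ge>) (eigenvalue_list A)"
proof -
  from spectral_real[OF A sym] obtain U D where UD: "U \<in> carrier_mat n n" "D \<in> carrier_mat n n"
    "diagonal_mat D" "transpose_mat U * U = 1\<^sub>m n" "U * transpose_mat U = 1\<^sub>m n"
    "A = U * D * transpose_mat U" by blast
  define ls where "ls = diag_mat D"
  have len: "length ls = n" using UD(2) by (simp add: ls_def diag_mat_def)
  have ls_nth: "\<forall>i<n. ls ! i = D $$ (i,i)" using UD(2) by (simp add: ls_def diag_mat_def)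
  have sim: "similar_mat A D"
    unfolding similar_mat_def similar_mat_wit_def
    using UD A by (intro exI[of _ U] exI[of _ "transpose_mat U"]) (auto simp: Let_def)
  have ut: "upper_triangular D" using UD(2,3) unfolding upper_triangular_def diagonal_mat_def by auto
  have cp: "char_poly A = (\<Prod>a\<leftarrow>ls. [:- a, 1:])"
    unfolding char_poly_similar[OF sim] ls_def by (rule char_poly_upper_triangular[OF UD(2) ut])
  have el: "eigenvalue_list A = rev (sort ls)" by (rule eigenvalue_list_eq[OF A cp len])
  have "mset (eigenvalue_list A) = mset ls" unfolding el by simp
  from permutation_Ex_bij[OF this] obtain f where f: "bij_betw f {..<n} {..<n}"
    "\<forall>i<n. eigenvalue_list A ! i = ls ! f i"
    using len el by auto
  have fn: "\<forall>k<n. f k < n" using f(1) by (auto simp: bij_betw_def)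
  define U' where "U' = (\<lambda>v k. U $$ (v, f k))"
  have UtU: "\<forall>k<n. \<forall>l<n. (\<Sum>v<n. U $$ (v,k) * U $$ (v,l)) = (if k = l then 1 else 0)"
  proof (intro allI impI)
    fix k l assume kl: "k < n" "l < n"
    have "(transpose_mat U * U) $$ (k,l) = (\<Sum>v<n. U $$ (v,k) * U $$ (v,l))"
      using UD(1) kl by (simp add: scalar_prod_def atLeast0LessThan)
    then show "(\<Sum>v<n. U $$ (v,k) * U $$ (v,l)) = (if k = l then 1 else 0)" using UD(4) kl by simp
  qed
  have UUt: "\<forall>v<n. \<forall>w<n. (\<Sum>k<n. U $$ (v,k) * U $$ (w,k)) = (if v = w then 1 else 0)"
  proof (intro allI impI)
    fix v w assume vw: "v < n" "w < n"
    have "(U * transpose_mat U) $$ (v,w) = (\<Sum>k<n. U $$ (v,k) * U $$ (w,k))"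
      using UD(1) vw by (simp add: scalar_prod_def atLeast0LessThan)
    then show "(\<Sum>k<n. U $$ (v,k) * U $$ (w,k)) = (if v = w then 1 else 0)" using UD(5) vw by simp
  qed
  have o1: "orthon n n U'"
    unfolding orthon_def U'_def
  proof (intro allI impI)
    fix k l assume kl: "k < n" "l < n"
    have "f k = f l \<longleftrightarrow> k = l" using f(1) kl by (auto simp: bij_betw_def inj_on_def)
    then show "(\<Sum>v<n. U $$ (v, f k) * U $$ (v, f l)) = (if k = l then 1 else 0)"
      using UtU fn kl by simp
  qed
  have reidx: "(\<Sum>k<n. g (f k)) = (\<Sum>k<n. g k)" for g :: "nat \<Rightarrow> real"
    using sum.reindex_bij_betw[OF f(1), of g] .
  have o2: "\<forall>v<n. \<forall>w<n. (\<Sum>k<n. U' v k * U' w k) = (if v = w then 1 else 0)"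
  proof (intro allI impI)
    fix v w assume vw: "v < n" "w < n"
    have "(\<Sum>k<n. U' v k * U' w k) = (\<Sum>k<n. U $$ (v,k) * U $$ (w,k))"
      unfolding U'_def by (rule reidx)
    then show "(\<Sum>k<n. U' v k * U' w k) = (if v = w then 1 else 0)" using UUt vw by simp
  qed
  have o3: "\<forall>v<n. \<forall>w<n. A $$ (v,w) = (\<Sum>k<n. U' v k * eigenvalue_list A ! k * U' w k)"
  proof (intro allI impI)
    fix v w assume vw: "v < n" "w < n"
    have inner: "(\<Sum>k<n. U $$ (v,k) * D $$ (k,j)) = U $$ (v,j) * D $$ (j,j)" if j: "j < n" for j
    proof -
      have "(\<Sum>k<n. U $$ (v,k) * D $$ (k,j)) = U $$ (v,j) * D $$ (j,j) + (\<Sum>k\<in>{..<n} - {j}. U $$ (v,k) * D $$ (k,j))"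
        using j by (simp add: sum.remove)
      also have "(\<Sum>k\<in>{..<n} - {j}. U $$ (v,k) * D $$ (k,j)) = 0"
        using UD(2,3) j unfolding diagonal_mat_def by (intro sum.neutral) auto
      finally show ?thesis by simp
    qed
    have "A $$ (v,w) = (\<Sum>j<n. (\<Sum>k<n. U $$ (v,k) * D $$ (k,j)) * U $$ (w,j))"
      unfolding UD(6) using UD(1,2) vw by (simp add: scalar_prod_def atLeast0LessThan del: assoc_mult_mat)
    also have "\<dots> = (\<Sum>j<n. U $$ (v,j) * D $$ (j,j) * U $$ (w,j))"
      using inner by simp
    also have "\<dots> = (\<Sum>k<n. U $$ (v,f k) * D $$ (f k,f k) * U $$ (w,f k))"
      using reidx[of "\<lambda>j. U $$ (v,j) * D $$ (j,j) * U $$ (w,j)"] by simp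
    also have "\<dots> = (\<Sum>k<n. U' v k * eigenvalue_list A ! k * U' w k)"
      unfolding U'_def using f(2) ls_nth fn by (intro sum.cong refl) auto
    finally show "A $$ (v,w) = (\<Sum>k<n. U' v k * eigenvalue_list A ! k * U' w k)" .
  qed
  have "length (eigenvalue_list A) = n" using el len by simp
  moreover have "sorted_wrt (\<ge>) (eigenvalue_list A)" using el by (simp add: sorted_wrt_rev)
  ultimately show ?thesis using o1 o2 o3 by blast
qed



lemma cis_root_sum:
  assumes k: "k < c" and k': "k' < c"
  shows "(\<Sum>j<c. cnj (cis (2 * pi * real j * real k / real c)) * cis (2 * pi * real j * real k' / real c))
    = (if k = k' then of_nat c else 0)"
proof -
  have c: "real c > 0" using k by simp
  define \<theta> where "\<theta> = 2 * pi * (real k' - real k) / real c"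
  define z where "z = cis \<theta>"
  have trm: "cnj (cis (2 * pi * real j * real k / real c)) * cis (2 * pi * real j * real k' / real c) = z ^ j" for j
  proof -
    have "cnj (cis (2 * pi * real j * real k / real c)) * cis (2 * pi * real j * real k' / real c)
        = cis (- (2 * pi * real j * real k / real c) + 2 * pi * real j * real k' / real c)"
      by (simp add: cis_cnj cis_mult)
    also have "- (2 * pi * real j * real k / real c) + 2 * pi * real j * real k' / real c = real j * \<theta>"
      unfolding \<theta>_def using c by (simp add: field_simps)
    finally show ?thesis unfolding z_def by (simp add: DeMoivre)
  qed
  have S: "(\<Sum>j<c. cnj (cis (2 * pi * real j * real k / real c)) * cis (2 * pi * real j * real k' / real c))
     = (\<Sum>j<c. z ^ j)" by (simp only: trm)
  show ?thesis
  proof (cases "k = k'")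
    case True
    then have "z = 1" unfolding z_def \<theta>_def by simp
    then show ?thesis using S True by simp
  next
    case False
    have zc: "z ^ c = 1"
    proof -
      have "z ^ c = cis (real c * \<theta>)" unfolding z_def by (simp add: DeMoivre)
      also have "real c * \<theta> = 2 * pi * (real k' - real k)" unfolding \<theta>_def using c by simp
      also have "cis (2 * pi * (real k' - real k)) = 1"
        by (rule cis_multiple_2pi) simp
      finally show ?thesis .
    qed
    have z1: "z \<noteq> 1"
    proof
      assume "z = 1"
      then have "cos \<theta> = 1" unfolding z_def by (metis cis.sel(1) one_complex.sel(1))
      then obtain m :: int where m: "\<theta> = real_of_int m * 2 * pi" by (auto simp: cos_one_2pi_int)
      have "2 * pi * ((real k' - real k) / real c) = \<theta>" unfolding \<theta>_def by simp
      also have "\<dots> = 2 * pi * real_of_int m" using m by simp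
      finally have eq: "2 * pi * ((real k' - real k) / real c) = 2 * pi * real_of_int m" .
      have "(real k' - real k) / real c = real_of_int m"
        by (rule mult_left_cancel[THEN iffD1, OF _ eq]) simp
      then have "real_of_int m * real c = real k' - real k"
        using c by (simp add: divide_eq_eq)
      moreover have "real k' - real k < real c" "real k - real k' < real c" using k k' by auto
      moreover have "real k' - real k \<noteq> 0" using False by simp
      ultimately show False
      proof -
        assume e: "real_of_int m * real c = real k' - real k"
          and l1: "real k' - real k < real c" and l2: "real k - real k' < real c" and nz: "real k' - real k \<noteq> 0"
        consider "m \<ge> 1" | "m \<le> -1" | "m = 0" by linarith
        then show False
        proof cases
          case 1
          then have "real_of_int m * real c \<ge> 1 * real c" using c by (intro mult_right_mono) auto
          then show False using e l1 by simp
        next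
          case 2
          then have "real_of_int m * real c \<le> (-1) * real c" using c by (intro mult_right_mono) auto
          then show False using e l2 by simp
        next
          case 3
          then show False using e nz by simp
        qed
      qed
    qed
    have "(\<Sum>j<c. z ^ j) = 0" using z1 zc by (simp add: sum_gp_strict)
    then show ?thesis using S False by simp
  qed
qed

lemma sum_swap4:
  "(\<Sum>a\<in>A. \<Sum>b\<in>B. \<Sum>c\<in>C. \<Sum>d\<in>D. f a b c d) = (\<Sum>c\<in>C. \<Sum>d\<in>D. \<Sum>a\<in>A. \<Sum>b\<in>B. f a b c d)"
proof -
  have "(\<Sum>a\<in>A. \<Sum>b\<in>B. \<Sum>c\<in>C. \<Sum>d\<in>D. f a b c d) = (\<Sum>a\<in>A. \<Sum>c\<in>C. \<Sum>b\<in>B. \<Sum>d\<in>D. f a b c d)"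
    by (rule sum.cong[OF refl], rule sum.swap)
  also have "\<dots> = (\<Sum>c\<in>C. \<Sum>a\<in>A. \<Sum>b\<in>B. \<Sum>d\<in>D. f a b c d)" by (rule sum.swap)
  also have "\<dots> = (\<Sum>c\<in>C. \<Sum>a\<in>A. \<Sum>d\<in>D. \<Sum>b\<in>B. f a b c d)"
    by (intro sum.cong refl, rule sum.swap)
  also have "\<dots> = (\<Sum>c\<in>C. \<Sum>d\<in>D. \<Sum>a\<in>A. \<Sum>b\<in>B. f a b c d)"
    by (intro sum.cong refl, rule sum.swap)
  finally show ?thesis .
qed

lemma cnj_sum_mult_sum:
  fixes a b :: "'x \<Rightarrow> complex"
  shows "cnj (\<Sum>k\<in>A. a k) * (\<Sum>l\<in>B. b l) = (\<Sum>k\<in>A. \<Sum>l\<in>B. cnj (a k) * b l)"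
  by (simp add: cnj_sum sum_product)

definition omg :: "nat \<Rightarrow> nat \<Rightarrow> nat \<Rightarrow> complex" where
  "omg c j k = cis (2 * pi * real j * real k / real c)"

lemma kernel_sum:
  fixes p q :: "nat \<Rightarrow> nat \<Rightarrow> nat \<Rightarrow> complex"
  assumes herm: "\<forall>k<c. \<forall>i<d. cnj (p k i l) = p k l i"
  shows "(\<Sum>j<c. \<Sum>i<d. cnj (\<Sum>k<c. omg c j k * p k i l) * (\<Sum>k<c. omg c j k * q k i m))
    = of_nat c * (\<Sum>k<c. \<Sum>i<d. p k l i * q k i m)"
proof -
  have "(\<Sum>j<c. \<Sum>i<d. cnj (\<Sum>k<c. omg c j k * p k i l) * (\<Sum>k<c. omg c j k * q k i m))
    = (\<Sum>j<c. \<Sum>i<d. \<Sum>k<c. \<Sum>k'<c. (cnj (omg c j k) * omg c j k') * (cnj (p k i l) * q k' i m))"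
    by (intro sum.cong refl, subst cnj_sum_mult_sum, intro sum.cong refl) (simp add: mult_ac)
  also have "\<dots> = (\<Sum>k<c. \<Sum>k'<c. \<Sum>j<c. \<Sum>i<d. (cnj (omg c j k) * omg c j k') * (cnj (p k i l) * q k' i m))"
    by (rule sum_swap4)
  also have "\<dots> = (\<Sum>k<c. \<Sum>k'<c. (\<Sum>j<c. cnj (omg c j k) * omg c j k') * (\<Sum>i<d. cnj (p k i l) * q k' i m))"
    by (simp add: sum_product)
  also have "\<dots> = (\<Sum>k<c. \<Sum>k'<c. (if k = k' then of_nat c else 0) * (\<Sum>i<d. p k l i * q k' i m))"
  proof (intro sum.cong refl)
    fix k k' assume kk: "k \<in> {..<c}" "k' \<in> {..<c}"
    have "(\<Sum>j<c. cnj (omg c j k) * omg c j k') = (if k = k' then of_nat c else 0)"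
      unfolding omg_def using kk by (intro cis_root_sum) auto
    moreover have "(\<Sum>i<d. cnj (p k i l) * q k' i m) = (\<Sum>i<d. p k l i * q k' i m)"
      using herm kk by (intro sum.cong refl) auto
    ultimately show "(\<Sum>j<c. cnj (omg c j k) * omg c j k') * (\<Sum>i<d. cnj (p k i l) * q k' i m)
        = (if k = k' then of_nat c else 0) * (\<Sum>i<d. p k l i * q k' i m)" by simp
  qed
  also have "\<dots> = (\<Sum>k<c. of_nat c * (\<Sum>i<d. p k l i * q k i m))"
  proof (intro sum.cong refl)
    fix k assume "k \<in> {..<c}"
    then show "(\<Sum>k'<c. (if k = k' then of_nat c else 0) * (\<Sum>i<d. p k l i * q k' i m))
        = of_nat c * (\<Sum>i<d. p k l i * q k i m)"
    proof -
      have "(\<Sum>k'<c. (if k = k' then of_nat c else 0) * (\<Sum>i<d. p k l i * q k' i m))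
          = (\<Sum>k'<c. if k = k' then of_nat c * (\<Sum>i<d. p k l i * q k' i m) else 0)"
        by (intro sum.cong refl) simp
      also have "\<dots> = of_nat c * (\<Sum>i<d. p k l i * q k i m)"
        using \<open>k \<in> {..<c}\<close> by (simp add: sum.delta)
      finally show ?thesis .
    qed
  qed
  also have "\<dots> = of_nat c * (\<Sum>k<c. \<Sum>i<d. p k l i * q k i m)" by (simp add: sum_distrib_left)
  finally show ?thesis .
qed

definition sF :: "nat \<Rightarrow> (nat \<Rightarrow> nat \<Rightarrow> nat \<Rightarrow> nat \<Rightarrow> complex) \<Rightarrow> nat \<Rightarrow> nat \<Rightarrow> nat \<Rightarrow> nat \<Rightarrow> complex" where
  "sF c p v j i l = (\<Sum>k<c. omg c j k * p v k i l)"

definition YF :: "nat \<Rightarrow> nat \<Rightarrow> (nat \<Rightarrow> nat \<Rightarrow> nat \<Rightarrow> nat \<Rightarrow> complex) \<Rightarrow> (nat \<Rightarrow> nat \<Rightarrow> complex) \<Rightarrow> nat \<Rightarrow> nat \<Rightarrow> nat \<Rightarrow> complex" where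
  "YF c d p X j v i = (\<Sum>l<d. sF c p v j i l * X v l)"

lemma bilinear_YF:
  "(\<Sum>j<c. \<Sum>i<d. cnj (YF c d p X j v i) * YF c d p X j w i)
   = (\<Sum>l<d. \<Sum>m<d. (cnj (X v l) * X w m) * (\<Sum>j<c. \<Sum>i<d. cnj (sF c p v j i l) * sF c p w j i m))"
proof -
  have "(\<Sum>j<c. \<Sum>i<d. cnj (YF c d p X j v i) * YF c d p X j w i)
     = (\<Sum>j<c. \<Sum>i<d. \<Sum>l<d. \<Sum>m<d. (cnj (X v l) * X w m) * (cnj (sF c p v j i l) * sF c p w j i m))"
    unfolding YF_def
    by (intro sum.cong refl, subst cnj_sum_mult_sum, intro sum.cong refl) (simp add: mult_ac)
  also have "\<dots> = (\<Sum>l<d. \<Sum>m<d. \<Sum>j<c. \<Sum>i<d. (cnj (X v l) * X w m) * (cnj (sF c p v j i l) * sF c p w j i m))"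
    by (rule sum_swap4)
  also have "\<dots> = (\<Sum>l<d. \<Sum>m<d. (cnj (X v l) * X w m) * (\<Sum>j<c. \<Sum>i<d. cnj (sF c p v j i l) * sF c p w j i m))"
    by (simp add: sum_distrib_left)
  finally show ?thesis .
qed

lemma quantum_identities:
  fixes p :: "nat \<Rightarrow> nat \<Rightarrow> nat \<Rightarrow> nat \<Rightarrow> complex" and Am :: "nat \<Rightarrow> nat \<Rightarrow> real"
    and X :: "nat \<Rightarrow> nat \<Rightarrow> complex"
  assumes herm: "\<forall>v<n. \<forall>k<c. \<forall>i<d. \<forall>l<d. cnj (p v k i l) = p v k l i"
    and idem: "\<forall>v<n. \<forall>k<c. \<forall>l<d. \<forall>m<d. (\<Sum>i<d. p v k l i * p v k i m) = p v k l m"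
    and sum1: "\<forall>v<n. \<forall>l<d. \<forall>m<d. (\<Sum>k<c. p v k l m) = (if l = m then 1 else 0)"
    and orth: "\<forall>v<n. \<forall>w<n. Am v w \<noteq> 0 \<longrightarrow> (\<forall>k<c. \<forall>l<d. \<forall>m<d. (\<Sum>i<d. p v k l i * p w k i m) = 0)"
  shows "(\<Sum>j<c. \<Sum>i<d. \<Sum>v<n. \<Sum>w<n. of_real (Am v w) * (cnj (YF c d p X j v i) * YF c d p X j w i)) = 0"
    and "(\<Sum>j<c. \<Sum>i<d. \<Sum>v<n. cnj (YF c d p X j v i) * YF c d p X j v i)
         = of_nat c * (\<Sum>i<d. \<Sum>v<n. cnj (X v i) * X v i)"
    and "\<forall>v<n. \<forall>i<d. YF c d p X 0 v i = X v i"
proof -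
  have K: "(\<Sum>j<c. \<Sum>i<d. cnj (sF c p v j i l) * sF c p w j i m)
      = of_nat c * (\<Sum>k<c. \<Sum>i<d. p v k l i * p w k i m)" if "v < n" "l < d" for v w l m
    unfolding sF_def using herm that by (intro kernel_sum) auto
  show "(\<Sum>j<c. \<Sum>i<d. \<Sum>v<n. \<Sum>w<n. of_real (Am v w) * (cnj (YF c d p X j v i) * YF c d p X j w i)) = 0"
  proof -
    have "(\<Sum>j<c. \<Sum>i<d. \<Sum>v<n. \<Sum>w<n. of_real (Am v w) * (cnj (YF c d p X j v i) * YF c d p X j w i))
      = (\<Sum>v<n. \<Sum>w<n. \<Sum>j<c. \<Sum>i<d. of_real (Am v w) * (cnj (YF c d p X j v i) * YF c d p X j w i))"
      by (rule sum_swap4)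
    also have "\<dots> = (\<Sum>v<n. \<Sum>w<n. of_real (Am v w) * (\<Sum>j<c. \<Sum>i<d. cnj (YF c d p X j v i) * YF c d p X j w i))"
      by (simp add: sum_distrib_left)
    also have "\<dots> = 0"
    proof (intro sum.neutral ballI)
      fix v w assume vw: "v \<in> {..<n}" "w \<in> {..<n}"
      show "of_real (Am v w) * (\<Sum>j<c. \<Sum>i<d. cnj (YF c d p X j v i) * YF c d p X j w i) = 0"
      proof (cases "Am v w = 0")
        case True then show ?thesis by simp
      next
        case False
        have "(\<Sum>j<c. \<Sum>i<d. cnj (YF c d p X j v i) * YF c d p X j w i)
          = (\<Sum>l<d. \<Sum>m<d. (cnj (X v l) * X w m) * (\<Sum>j<c. \<Sum>i<d. cnj (sF c p v j i l) * sF c p w j i m))"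
          by (rule bilinear_YF)
        also have "\<dots> = 0"
        proof (intro sum.neutral ballI)
          fix l m assume lm: "l \<in> {..<d}" "m \<in> {..<d}"
          have "(\<Sum>j<c. \<Sum>i<d. cnj (sF c p v j i l) * sF c p w j i m)
            = of_nat c * (\<Sum>k<c. \<Sum>i<d. p v k l i * p w k i m)" using K vw lm by simp
          also have "(\<Sum>k<c. \<Sum>i<d. p v k l i * p w k i m) = 0"
            by (rule sum.neutral) (use orth vw lm False in auto)
          finally show "(cnj (X v l) * X w m) * (\<Sum>j<c. \<Sum>i<d. cnj (sF c p v j i l) * sF c p w j i m) = 0"
            by simp
        qed
        finally show ?thesis by simp
      qed
    qed
    finally show ?thesis .
  qed
  show "(\<Sum>j<c. \<Sum>i<d. \<Sum>v<n. cnj (YF c d p X j v i) * YF c d p X j v i)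
         = of_nat c * (\<Sum>i<d. \<Sum>v<n. cnj (X v i) * X v i)"
  proof -
    have "(\<Sum>j<c. \<Sum>i<d. \<Sum>v<n. cnj (YF c d p X j v i) * YF c d p X j v i)
       = (\<Sum>j<c. \<Sum>v<n. \<Sum>i<d. cnj (YF c d p X j v i) * YF c d p X j v i)"
      by (rule sum.cong[OF refl], rule sum.swap)
    also have "\<dots> = (\<Sum>v<n. \<Sum>j<c. \<Sum>i<d. cnj (YF c d p X j v i) * YF c d p X j v i)"
      by (rule sum.swap)
    also have "\<dots> = (\<Sum>v<n. of_nat c * (\<Sum>i<d. cnj (X v i) * X v i))"
    proof (intro sum.cong refl)
      fix v assume v: "v \<in> {..<n}"
      have "(\<Sum>j<c. \<Sum>i<d. cnj (YF c d p X j v i) * YF c d p X j v i)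
          = (\<Sum>l<d. \<Sum>m<d. (cnj (X v l) * X v m) * (\<Sum>j<c. \<Sum>i<d. cnj (sF c p v j i l) * sF c p v j i m))"
        by (rule bilinear_YF)
      also have "\<dots> = (\<Sum>l<d. \<Sum>m<d. (cnj (X v l) * X v m) * (if l = m then of_nat c else 0))"
      proof (intro sum.cong refl)
        fix l m assume lm: "l \<in> {..<d}" "m \<in> {..<d}"
        have "(\<Sum>j<c. \<Sum>i<d. cnj (sF c p v j i l) * sF c p v j i m)
            = of_nat c * (\<Sum>k<c. \<Sum>i<d. p v k l i * p v k i m)" using K v lm by simp
        also have "(\<Sum>k<c. \<Sum>i<d. p v k l i * p v k i m) = (\<Sum>k<c. p v k l m)"
          using idem v lm by (intro sum.cong refl) auto
        also have "\<dots> = (if l = m then 1 else 0)" using sum1 v lm by auto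
        finally show "(cnj (X v l) * X v m) * (\<Sum>j<c. \<Sum>i<d. cnj (sF c p v j i l) * sF c p v j i m)
            = (cnj (X v l) * X v m) * (if l = m then of_nat c else 0)" by simp
      qed
      also have "\<dots> = (\<Sum>l<d. of_nat c * (cnj (X v l) * X v l))"
      proof (intro sum.cong refl)
        fix l assume l: "l \<in> {..<d}"
        have "(\<Sum>m<d. (cnj (X v l) * X v m) * (if l = m then of_nat c else 0))
            = (\<Sum>m<d. if l = m then of_nat c * (cnj (X v l) * X v m) else 0)"
          by (intro sum.cong refl) simp
        also have "\<dots> = of_nat c * (cnj (X v l) * X v l)" using l by (simp add: sum.delta)
        finally show "(\<Sum>m<d. (cnj (X v l) * X v m) * (if l = m then of_nat c else 0))
            = of_nat c * (cnj (X v l) * X v l)" .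
      qed
      also have "\<dots> = of_nat c * (\<Sum>i<d. cnj (X v i) * X v i)" by (simp add: sum_distrib_left)
      finally show "(\<Sum>j<c. \<Sum>i<d. cnj (YF c d p X j v i) * YF c d p X j v i)
          = of_nat c * (\<Sum>i<d. cnj (X v i) * X v i)" .
    qed
    also have "\<dots> = of_nat c * (\<Sum>v<n. \<Sum>i<d. cnj (X v i) * X v i)" by (simp add: sum_distrib_left)
    also have "(\<Sum>v<n. \<Sum>i<d. cnj (X v i) * X v i) = (\<Sum>i<d. \<Sum>v<n. cnj (X v i) * X v i)"
      by (rule sum.swap)
    finally show ?thesis .
  qed
  show "\<forall>v<n. \<forall>i<d. YF c d p X 0 v i = X v i"
  proof (intro allI impI)
    fix v i assume vi: "v < n" "i < d"
    have s0: "sF c p v 0 i l = (if i = l then 1 else 0)" if "l < d" for l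
      unfolding sF_def omg_def using sum1 vi that by simp
    have "YF c d p X 0 v i = (\<Sum>l<d. (if i = l then X v l else 0))"
      unfolding YF_def using s0 by (intro sum.cong refl) auto
    also have "\<dots> = X v i" using vi by (simp add: sum.delta)
    finally show "YF c d p X 0 v i = X v i" .
  qed
qed



definition cc :: "nat \<Rightarrow> (nat \<Rightarrow> nat \<Rightarrow> real) \<Rightarrow> (nat \<Rightarrow> complex) \<Rightarrow> nat \<Rightarrow> complex" where
  "cc n U z k = (\<Sum>v<n. of_real (U v k) * z v)"

lemma cnj_mult_self: "cnj z * z = complex_of_real ((cmod z)^2)"
  by (subst complex_norm_square) (simp add: mult.commute)

lemma spec_quad:
  fixes Am U :: "nat \<Rightarrow> nat \<Rightarrow> real" and \<mu> :: "nat \<Rightarrow> real" and z :: "nat \<Rightarrow> complex"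
  assumes spec: "\<forall>v<n. \<forall>w<n. Am v w = (\<Sum>k<n. U v k * \<mu> k * U w k)"
  shows "(\<Sum>v<n. \<Sum>w<n. of_real (Am v w) * (cnj (z v) * z w))
    = of_real (\<Sum>k<n. \<mu> k * (cmod (cc n U z k))^2)"
proof -
  have "(\<Sum>v<n. \<Sum>w<n. of_real (Am v w) * (cnj (z v) * z w))
      = (\<Sum>v<n. \<Sum>w<n. \<Sum>k<n. of_real (\<mu> k) * ((of_real (U v k) * cnj (z v)) * (of_real (U w k) * z w)))"
  proof (intro sum.cong refl)
    fix v w assume "v \<in> {..<n}" "w \<in> {..<n}"
    then have "of_real (Am v w) = (\<Sum>k<n. of_real (U v k * \<mu> k * U w k) :: complex)"
      using spec by (simp add: of_real_sum)
    then show "of_real (Am v w) * (cnj (z v) * z w)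
      = (\<Sum>k<n. of_real (\<mu> k) * ((of_real (U v k) * cnj (z v)) * (of_real (U w k) * z w)))"
      by (simp add: sum_distrib_left sum_distrib_right mult_ac)
  qed
  also have "\<dots> = (\<Sum>v<n. \<Sum>k<n. \<Sum>w<n. of_real (\<mu> k) * ((of_real (U v k) * cnj (z v)) * (of_real (U w k) * z w)))"
    by (rule sum.cong[OF refl], rule sum.swap)
  also have "\<dots> = (\<Sum>k<n. \<Sum>v<n. \<Sum>w<n. of_real (\<mu> k) * ((of_real (U v k) * cnj (z v)) * (of_real (U w k) * z w)))"
    by (rule sum.swap)
  also have "\<dots> = (\<Sum>k<n. of_real (\<mu> k) * ((\<Sum>v<n. of_real (U v k) * cnj (z v)) * (\<Sum>w<n. of_real (U w k) * z w)))"
    unfolding sum_product by (simp only: sum_distrib_left)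
  also have "\<dots> = (\<Sum>k<n. of_real (\<mu> k) * (cnj (cc n U z k) * cc n U z k))"
    unfolding cc_def by (simp add: cnj_sum)
  also have "\<dots> = (\<Sum>k<n. of_real (\<mu> k * (cmod (cc n U z k))^2))"
    by (simp add: cnj_mult_self)
  also have "\<dots> = of_real (\<Sum>k<n. \<mu> k * (cmod (cc n U z k))^2)"
    by (simp add: of_real_sum)
  finally show ?thesis .
qed

lemma spec_norm:
  fixes U :: "nat \<Rightarrow> nat \<Rightarrow> real" and z :: "nat \<Rightarrow> complex"
  assumes compl: "\<forall>v<n. \<forall>w<n. (\<Sum>k<n. U v k * U w k) = (if v = w then 1 else 0)"
  shows "(\<Sum>v<n. cnj (z v) * z v) = of_real (\<Sum>k<n. (cmod (cc n U z k))^2)"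
proof -
  have "of_real (\<Sum>k<n. (cmod (cc n U z k))^2) = (\<Sum>k<n. cnj (cc n U z k) * cc n U z k)"
    by (simp add: cnj_mult_self of_real_sum)
  also have "\<dots> = (\<Sum>k<n. (\<Sum>v<n. of_real (U v k) * cnj (z v)) * (\<Sum>w<n. of_real (U w k) * z w))"
    unfolding cc_def by (simp add: cnj_sum)
  also have "\<dots> = (\<Sum>k<n. \<Sum>v<n. \<Sum>w<n. of_real (U v k * U w k) * (cnj (z v) * z w))"
    by (simp only: sum_product) (simp add: mult_ac)
  also have "\<dots> = (\<Sum>v<n. \<Sum>w<n. \<Sum>k<n. of_real (U v k * U w k) * (cnj (z v) * z w))"
  proof -
    have "(\<Sum>k<n. \<Sum>v<n. \<Sum>w<n. of_real (U v k * U w k) * (cnj (z v) * z w))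
       = (\<Sum>v<n. \<Sum>k<n. \<Sum>w<n. of_real (U v k * U w k) * (cnj (z v) * z w))"
      by (rule sum.swap)
    also have "\<dots> = (\<Sum>v<n. \<Sum>w<n. \<Sum>k<n. of_real (U v k * U w k) * (cnj (z v) * z w))"
      by (rule sum.cong[OF refl], rule sum.swap)
    finally show ?thesis .
  qed
  also have "\<dots> = (\<Sum>v<n. \<Sum>w<n. (if v = w then cnj (z v) * z w else 0))"
  proof (intro sum.cong refl)
    fix v w assume vw: "v \<in> {..<n}" "w \<in> {..<n}"
    have h: "(\<Sum>k<n. U v k * U w k) = (if v = w then 1 else 0)" using compl vw by simp
    have "(\<Sum>k<n. of_real (U v k * U w k) * (cnj (z v) * z w))
        = of_real (\<Sum>k<n. U v k * U w k) * (cnj (z v) * z w)"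
      by (simp only: of_real_sum sum_distrib_right)
    also have "\<dots> = of_real (if v = w then 1 else 0) * (cnj (z v) * z w)" by (simp only: h)
    also have "\<dots> = (if v = w then cnj (z v) * z w else 0)" by simp
    finally show "(\<Sum>k<n. of_real (U v k * U w k) * (cnj (z v) * z w)) = (if v = w then cnj (z v) * z w else 0)" .
  qed
  also have "\<dots> = (\<Sum>v<n. cnj (z v) * z v)" by (simp add: sum.delta)
  finally show ?thesis by simp
qed

lemma cc_eigencomb:
  fixes U :: "nat \<Rightarrow> nat \<Rightarrow> real" and \<beta> :: "nat \<Rightarrow> complex"
  assumes orth: "orthon n n U" and T: "T \<subseteq> {..<n}" and k: "k < n"
  shows "cc n U (\<lambda>v. \<Sum>t\<in>T. \<beta> t * of_real (U v t)) k = (if k \<in> T then \<beta> k else 0)"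
proof -
  have fT: "finite T" using T finite_subset by blast
  have "cc n U (\<lambda>v. \<Sum>t\<in>T. \<beta> t * of_real (U v t)) k = (\<Sum>v<n. \<Sum>t\<in>T. \<beta> t * of_real (U v k * U v t))"
    unfolding cc_def by (simp add: sum_distrib_left mult_ac)
  also have "\<dots> = (\<Sum>t\<in>T. \<Sum>v<n. \<beta> t * of_real (U v k * U v t))" by (rule sum.swap)
  also have "\<dots> = (\<Sum>t\<in>T. \<beta> t * of_real (\<Sum>v<n. U v k * U v t))"
    by (simp add: sum_distrib_left of_real_sum)
  also have "\<dots> = (\<Sum>t\<in>T. if k = t then \<beta> t else 0)"
  proof (intro sum.cong refl)
    fix t assume "t \<in> T"
    then have "t < n" using T by auto
    then show "\<beta> t * of_real (\<Sum>v<n. U v k * U v t) = (if k = t then \<beta> t else 0)"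
      using orth k unfolding orthon_def by simp
  qed
  also have "\<dots> = (if k \<in> T then \<beta> k else 0)" using fT by (simp add: sum.delta)
  finally show ?thesis .
qed

lemma core_bound:
  fixes U Am :: "nat \<Rightarrow> nat \<Rightarrow> real" and \<mu> :: "nat \<Rightarrow> real"
    and p :: "nat \<Rightarrow> nat \<Rightarrow> nat \<Rightarrow> nat \<Rightarrow> complex"
  assumes orth: "orthon n n U"
    and compl: "\<forall>v<n. \<forall>w<n. (\<Sum>k<n. U v k * U w k) = (if v = w then 1 else 0)"
    and spec: "\<forall>v<n. \<forall>w<n. Am v w = (\<Sum>k<n. U v k * \<mu> k * U w k)"
    and mono1: "\<forall>k<n. 1 \<le> k \<longrightarrow> \<mu> k \<le> \<mu> 1"
    and T: "T = {k. k < n \<and> \<mu> k = \<mu> (n - 1)}"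
    and gc: "c - 1 < card T" and c1: "c \<ge> 1" and d: "d > 0"
    and herm: "\<forall>v<n. \<forall>k<c. \<forall>i<d. \<forall>l<d. cnj (p v k i l) = p v k l i"
    and idem: "\<forall>v<n. \<forall>k<c. \<forall>l<d. \<forall>m<d. (\<Sum>i<d. p v k l i * p v k i m) = p v k l m"
    and sum1: "\<forall>v<n. \<forall>l<d. \<forall>m<d. (\<Sum>k<c. p v k l m) = (if l = m then 1 else 0)"
    and orthp: "\<forall>v<n. \<forall>w<n. Am v w \<noteq> 0 \<longrightarrow> (\<forall>k<c. \<forall>l<d. \<forall>m<d. (\<Sum>i<d. p v k l i * p w k i m) = 0)"
  shows "- \<mu> (n - 1) \<le> real (c - 1) * \<mu> 1"
proof -
  obtain c' where cc': "c = Suc c'" using c1 by (cases c) auto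
  have Tn: "T \<subseteq> {..<n}" using T by auto
  have fT: "finite T" using Tn finite_subset by blast
  define I where "I = T \<times> {..<d}"
  define J where "J = {..<c'} \<times> {..<d}"
  define XA where "XA = (\<lambda>(\<alpha> :: nat \<times> nat \<Rightarrow> complex) v l. \<Sum>t\<in>T. \<alpha> (t,l) * complex_of_real (U v t))"
  define M where "M = (\<lambda>(j,i) (t,l). \<Sum>v<n. of_real (U v 0) * sF c p v (Suc j) i l * complex_of_real (U v t))"
  have lin: "cc n U (\<lambda>v. YF c d p (XA \<alpha>) (Suc j) v i) 0 = (\<Sum>x\<in>I. M (j,i) x * \<alpha> x)" for \<alpha> j i
  proof -
    have "cc n U (\<lambda>v. YF c d p (XA \<alpha>) (Suc j) v i) 0
      = (\<Sum>v<n. \<Sum>l<d. \<Sum>t\<in>T. (of_real (U v 0) * sF c p v (Suc j) i l * complex_of_real (U v t)) * \<alpha> (t,l))"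
      unfolding cc_def YF_def XA_def by (simp add: sum_distrib_left mult_ac)
    also have "\<dots> = (\<Sum>l<d. \<Sum>v<n. \<Sum>t\<in>T. (of_real (U v 0) * sF c p v (Suc j) i l * complex_of_real (U v t)) * \<alpha> (t,l))"
      by (rule sum.swap)
    also have "\<dots> = (\<Sum>l<d. \<Sum>t\<in>T. \<Sum>v<n. (of_real (U v 0) * sF c p v (Suc j) i l * complex_of_real (U v t)) * \<alpha> (t,l))"
      by (rule sum.cong[OF refl], rule sum.swap)
    also have "\<dots> = (\<Sum>l<d. \<Sum>t\<in>T. M (j,i) (t,l) * \<alpha> (t,l))"
      unfolding M_def by (simp add: sum_distrib_right)
    also have "\<dots> = (\<Sum>t\<in>T. \<Sum>l<d. M (j,i) (t,l) * \<alpha> (t,l))" by (rule sum.swap)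
    also have "\<dots> = (\<Sum>x\<in>I. M (j,i) x * \<alpha> x)"
      unfolding I_def by (simp add: sum.cartesian_product)
    finally show ?thesis .
  qed
  have cardI: "card I = card T * d" unfolding I_def by (simp add: card_cartesian_product)
  have cardJ: "card J = c' * d" unfolding J_def by (simp add: card_cartesian_product)
  have "c' * d < card T * d" using gc cc' d by simp
  then have "card J < card I" using cardI cardJ by simp
  moreover have "finite I" unfolding I_def using fT by simp
  moreover have "finite J" unfolding J_def by simp
  ultimately obtain \<alpha> where \<alpha>: "\<exists>x\<in>I. \<alpha> x \<noteq> 0" "\<forall>y\<in>J. (\<Sum>x\<in>I. M y x * \<alpha> x) = 0"
    using homog_system_nonzero[of I J M] by blast
  define X where "X = XA \<alpha>"
  define Y where "Y = YF c d p X"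
  have constr: "cc n U (\<lambda>v. Y (Suc j) v i) 0 = 0" if "j < c'" "i < d" for j i
    using lin[of \<alpha> j i] \<alpha>(2) that unfolding Y_def X_def J_def by auto
  define qs where "qs = (\<lambda>(Z :: nat \<Rightarrow> nat \<Rightarrow> complex) i. \<Sum>k<n. \<mu> k * (cmod (cc n U (\<lambda>v. Z v i) k))^2)"
  define ns where "ns = (\<lambda>(Z :: nat \<Rightarrow> nat \<Rightarrow> complex) i. \<Sum>k<n. (cmod (cc n U (\<lambda>v. Z v i) k))^2)"
  have qeq: "(\<Sum>v<n. \<Sum>w<n. of_real (Am v w) * (cnj (Z v i) * Z w i)) = of_real (qs Z i)" for Z i
    unfolding qs_def by (rule spec_quad[OF spec])
  have neq: "(\<Sum>v<n. cnj (Z v i) * Z v i) = of_real (ns Z i)" for Z i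
    unfolding ns_def by (rule spec_norm[OF compl])
  note QI = quantum_identities[OF herm idem sum1 orthp, of X]
  have S1: "(\<Sum>j<c. \<Sum>i<d. qs (Y j) i) = 0"
  proof -
    have "(\<Sum>j<c. \<Sum>i<d. complex_of_real (qs (Y j) i)) = 0"
      using QI(1) unfolding Y_def by (simp add: qeq)
    then show ?thesis by (simp only: of_real_sum[symmetric] of_real_eq_0_iff)
  qed
  have S2: "(\<Sum>j<c. \<Sum>i<d. ns (Y j) i) = real c * (\<Sum>i<d. ns X i)"
  proof -
    have "(\<Sum>j<c. \<Sum>i<d. complex_of_real (ns (Y j) i)) = of_nat c * (\<Sum>i<d. complex_of_real (ns X i))"
      using QI(2) unfolding Y_def by (simp add: neq)
    then have "complex_of_real (\<Sum>j<c. \<Sum>i<d. ns (Y j) i) = complex_of_real (real c * (\<Sum>i<d. ns X i))"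
      by (simp add: of_real_sum)
    then show ?thesis by (simp only: of_real_eq_iff)
  qed
  have Y0: "\<forall>v<n. \<forall>i<d. Y 0 v i = X v i" using QI(3) unfolding Y_def .
  have ccY0: "cc n U (\<lambda>v. Y 0 v i) k = cc n U (\<lambda>v. X v i) k" if "i < d" for i k
    unfolding cc_def using Y0 that by (intro sum.cong refl) auto
  have qY0: "qs (Y 0) i = qs X i" and nY0: "ns (Y 0) i = ns X i" if "i < d" for i
    unfolding qs_def ns_def using ccY0[OF that] by simp_all
  have ccX: "cc n U (\<lambda>v. X v i) k = (if k \<in> T then \<alpha> (k,i) else 0)" if "k < n" for i k
  proof -
    have "(\<lambda>v. X v i) = (\<lambda>v. \<Sum>t\<in>T. \<alpha> (t,i) * complex_of_real (U v t))"
      unfolding X_def XA_def by simp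
    then show ?thesis using cc_eigencomb[OF orth Tn that, of "\<lambda>t. \<alpha> (t,i)"] by simp
  qed
  have qX: "qs X i = \<mu> (n - 1) * ns X i" for i
  proof -
    have "qs X i = (\<Sum>k<n. \<mu> (n - 1) * (cmod (cc n U (\<lambda>v. X v i) k))^2)"
      unfolding qs_def
    proof (intro sum.cong refl)
      fix k assume k: "k \<in> {..<n}"
      show "\<mu> k * (cmod (cc n U (\<lambda>v. X v i) k))^2 = \<mu> (n - 1) * (cmod (cc n U (\<lambda>v. X v i) k))^2"
        using ccX[of k i] k T by (cases "k \<in> T") auto
    qed
    then show ?thesis unfolding ns_def by (simp add: sum_distrib_left)
  qed
  have qY: "qs (Y (Suc j)) i \<le> \<mu> 1 * ns (Y (Suc j)) i" if "j < c'" "i < d" for j i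
  proof -
    have "qs (Y (Suc j)) i \<le> (\<Sum>k<n. \<mu> 1 * (cmod (cc n U (\<lambda>v. Y (Suc j) v i) k))^2)"
      unfolding qs_def
    proof (intro sum_mono)
      fix k assume k: "k \<in> {..<n}"
      show "\<mu> k * (cmod (cc n U (\<lambda>v. Y (Suc j) v i) k))^2 \<le> \<mu> 1 * (cmod (cc n U (\<lambda>v. Y (Suc j) v i) k))^2"
      proof (cases "k = 0")
        case True
        then show ?thesis using constr[OF that] by simp
      next
        case False
        then have "\<mu> k \<le> \<mu> 1" using mono1 k by auto
        then show ?thesis by (intro mult_right_mono) auto
      qed
    qed
    then show ?thesis unfolding ns_def by (simp add: sum_distrib_left)
  qed
  define N where "N = (\<Sum>i<d. ns X i)"
  have nsnn: "ns Z i \<ge> 0" for Z i unfolding ns_def by (intro sum_nonneg) auto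
  have Npos: "N > 0"
  proof -
    from \<alpha>(1) obtain t l where tl: "(t,l) \<in> I" "\<alpha> (t,l) \<noteq> 0" by auto
    then have t: "t \<in> T" "t < n" "l < d" using Tn unfolding I_def by auto
    have "(cmod (\<alpha> (t,l)))^2 > 0" using tl by simp
    also have "(cmod (\<alpha> (t,l)))^2 = (cmod (cc n U (\<lambda>v. X v l) t))^2" using ccX[OF t(2), of l] t by simp
    also have "\<dots> \<le> ns X l" unfolding ns_def using t by (intro member_le_sum) auto
    also have "\<dots> \<le> N" unfolding N_def using t nsnn by (intro member_le_sum) auto
    finally show ?thesis .
  qed
  have R: "(\<Sum>j<c'. \<Sum>i<d. ns (Y (Suc j)) i) = real c' * N"
  proof -
    have "(\<Sum>j<c. \<Sum>i<d. ns (Y j) i) = (\<Sum>i<d. ns (Y 0) i) + (\<Sum>j<c'. \<Sum>i<d. ns (Y (Suc j)) i)"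
      unfolding cc' by (rule sum.lessThan_Suc_shift)
    moreover have "(\<Sum>i<d. ns (Y 0) i) = N" unfolding N_def using nY0 by (intro sum.cong refl) auto
    ultimately show ?thesis using S2 cc' unfolding N_def by (simp add: algebra_simps)
  qed
  have "0 = (\<Sum>j<c. \<Sum>i<d. qs (Y j) i)" using S1 by simp
  also have "\<dots> = (\<Sum>i<d. qs (Y 0) i) + (\<Sum>j<c'. \<Sum>i<d. qs (Y (Suc j)) i)"
    unfolding cc' by (rule sum.lessThan_Suc_shift)
  also have "(\<Sum>i<d. qs (Y 0) i) = \<mu> (n - 1) * N"
    unfolding N_def using qY0 qX by (simp add: sum_distrib_left)
  also have "(\<Sum>j<c'. \<Sum>i<d. qs (Y (Suc j)) i) \<le> (\<Sum>j<c'. \<Sum>i<d. \<mu> 1 * ns (Y (Suc j)) i)"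
    using qY by (intro sum_mono) auto
  also have "\<dots> = \<mu> 1 * (\<Sum>j<c'. \<Sum>i<d. ns (Y (Suc j)) i)" by (simp add: sum_distrib_left)
  also have "\<dots> = \<mu> 1 * (real c' * N)" by (simp only: R)
  finally have "0 \<le> \<mu> (n - 1) * N + \<mu> 1 * (real c' * N)" by simp
  then have "(- \<mu> (n - 1)) * N \<le> (real c' * \<mu> 1) * N" by (simp add: algebra_simps)
  then have "- \<mu> (n - 1) \<le> real c' * \<mu> 1" by (rule mult_right_le_imp_le[OF _ Npos])
  then show ?thesis using cc' by simp
qed



lemma adjoint_entry:
  fixes P :: "complex mat"
  assumes "P \<in> carrier_mat d d" "i < d" "j < d"
  shows "mat_adjoint P $$ (i,j) = cnj (P $$ (j,i))"
  using assms unfolding mat_adjoint_def by (simp add: mat_of_rows_def)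

lemma min_eig_nonpos:
  fixes U Am :: "nat \<Rightarrow> nat \<Rightarrow> real" and \<mu> :: "nat \<Rightarrow> real"
  assumes compl: "\<forall>v<n. \<forall>w<n. (\<Sum>k<n. U v k * U w k) = (if v = w then 1 else 0)"
    and spec: "\<forall>v<n. \<forall>w<n. Am v w = (\<Sum>k<n. U v k * \<mu> k * U w k)"
    and n: "n \<ge> 1" and A00: "Am 0 0 = 0" and mn: "\<forall>k<n. \<mu> (n - 1) \<le> \<mu> k"
  shows "\<mu> (n - 1) \<le> 0"
proof -
  define z :: "nat \<Rightarrow> complex" where "z = (\<lambda>v. if v = 0 then 1 else 0)"
  have inner: "(\<Sum>w<n. of_real (Am v w) * (cnj (z v) * z w)) = (if v = 0 then of_real (Am v 0) else 0)" for v
  proof -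
    have "(\<Sum>w<n. of_real (Am v w) * (cnj (z v) * z w))
        = (\<Sum>w<n. if w = 0 then (if v = 0 then of_real (Am v 0) else 0) else 0)"
      by (intro sum.cong refl) (simp add: z_def)
    also have "\<dots> = (if v = 0 then of_real (Am v 0) else 0)" using n by (simp add: sum.delta')
    finally show ?thesis .
  qed
  have h1: "(\<Sum>v<n. \<Sum>w<n. of_real (Am v w) * (cnj (z v) * z w)) = of_real (Am 0 0)"
    using n by (simp add: inner sum.delta')
  have "complex_of_real (\<Sum>k<n. \<mu> k * (cmod (cc n U z k))^2) = complex_of_real (Am 0 0)"
    using trans[OF spec_quad[OF spec, of z, symmetric] h1] .
  then have q: "(\<Sum>k<n. \<mu> k * (cmod (cc n U z k))^2) = 0"
    using A00 by (simp only: of_real_eq_iff)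
  have "(\<Sum>v<n. cnj (z v) * z v) = (\<Sum>v<n. if v = 0 then 1 else 0)"
    by (intro sum.cong refl) (simp add: z_def)
  then have h2: "(\<Sum>v<n. cnj (z v) * z v) = 1" using n by (simp add: sum.delta')
  have "complex_of_real (\<Sum>k<n. (cmod (cc n U z k))^2) = 1"
    using trans[OF spec_norm[OF compl, of z, symmetric] h2] .
  then have nn: "(\<Sum>k<n. (cmod (cc n U z k))^2) = 1" by (simp only: of_real_eq_1_iff)
  have "\<mu> (n - 1) * (\<Sum>k<n. (cmod (cc n U z k))^2) \<le> (\<Sum>k<n. \<mu> k * (cmod (cc n U z k))^2)"
    unfolding sum_distrib_left using mn by (intro sum_mono mult_right_mono) auto
  then show ?thesis using q nn by simp
qed

lemma colorable_n:
  assumes "simple_graph n E"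
  shows "quantum_colorable n E n"
proof -
  define P :: "nat \<Rightarrow> nat \<Rightarrow> complex mat" where "P = (\<lambda>v k. mat 1 1 (\<lambda>_. if k = v then 1 else 0))"
  have "quantum_coloring n E n 1 P"
    unfolding quantum_coloring_def
  proof (intro conjI allI impI)
    fix v k assume "v < n" "k < n"
    show "orth_projector 1 (P v k)"
      unfolding orth_projector_def
    proof (intro conjI)
      show "P v k \<in> carrier_mat 1 1" by (simp add: P_def)
      show "P v k * P v k = P v k" by (rule eq_matI) (auto simp: P_def scalar_prod_def)
      show "mat_adjoint (P v k) = P v k"
        by (rule eq_matI) (auto simp: P_def mat_adjoint_def mat_of_rows_def)
    qed
  next
    fix v i j :: nat assume "v < n" "i < 1" "j < 1"
    then show "(\<Sum>k<n. P v k $$ (i,j)) = (if i = j then 1 else 0)"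
      by (simp add: P_def sum.delta')
  next
    fix v w k assume e: "E v w" and "k < n"
    have "v \<noteq> w" using e assms unfolding simple_graph_def by auto
    then show "P v k * P w k = 0\<^sub>m 1 1" by (intro eq_matI) (auto simp: P_def scalar_prod_def)
  qed
  then show ?thesis unfolding quantum_colorable_def by blast
qed

theorem theorem3:
  fixes n :: nat and E :: "nat \<Rightarrow> nat \<Rightarrow> bool"
  assumes "n \<ge> 2" and "simple_graph n E" and "connected_graph n E"
    and "eigenvalue_list (adj_matrix n E) ! 1 > 0"
  shows "real (quantum_chromatic_number n E) \<ge>
     1 + min (real (count_list (eigenvalue_list (adj_matrix n E))
                                 (eigenvalue_list (adj_matrix n E) ! (n - 1))))
             (\<bar>eigenvalue_list (adj_matrix n E) ! (n - 1)\<bar> / eigenvalue_list (adj_matrix n E) ! 1)"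
proof -
  note n2 = assms(1) and sg = assms(2) and mu2pos = assms(4)
  define A where "A = adj_matrix n E"
  define mus where "mus = eigenvalue_list A"
  define \<mu> where "\<mu> = (\<lambda>k. mus ! k)"
  have Acar: "A \<in> carrier_mat n n" by (simp add: A_def adj_matrix_def)
  have Aent: "A $$ (v,w) = (if E v w then 1 else 0)" if "v < n" "w < n" for v w
    using that by (simp add: A_def adj_matrix_def)
  have symE: "E v w \<longleftrightarrow> E w v" for v w using sg unfolding simple_graph_def by blast
  have Asym: "transpose_mat A = A"
    by (rule eq_matI) (use Acar in \<open>auto simp: Aent symE\<close>)
  from sorted_spectral[OF Acar Asym] obtain U where
    U: "orthon n n U" "\<forall>v<n. \<forall>w<n. (\<Sum>k<n. U v k * U w k) = (if v = w then 1 else 0)"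
      "\<forall>v<n. \<forall>w<n. A $$ (v,w) = (\<Sum>k<n. U v k * mus ! k * U w k)"
      "length mus = n" "sorted_wrt (\<ge>) mus"
    unfolding mus_def by blast
  define Am where "Am = (\<lambda>v w. A $$ (v,w))"
  have spec: "\<forall>v<n. \<forall>w<n. Am v w = (\<Sum>k<n. U v k * \<mu> k * U w k)"
    using U(3) unfolding Am_def \<mu>_def by simp
  have mono1: "\<forall>k<n. 1 \<le> k \<longrightarrow> \<mu> k \<le> \<mu> 1"
  proof (intro allI impI)
    fix k assume k: "k < n" "1 \<le> k"
    show "\<mu> k \<le> \<mu> 1"
    proof (cases "k = 1")
      case True then show ?thesis by simp
    next
      case False
      then have "1 < k" using k by simp
      then show ?thesis using sorted_wrt_nth_less[OF U(5), of 1 k] k U(4) unfolding \<mu>_def by simp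
    qed
  qed
  have mn: "\<forall>k<n. \<mu> (n - 1) \<le> \<mu> k"
  proof (intro allI impI)
    fix k assume k: "k < n"
    show "\<mu> (n - 1) \<le> \<mu> k"
    proof (cases "k = n - 1")
      case True then show ?thesis by simp
    next
      case False
      then have "k < n - 1" using k by simp
      then show ?thesis using sorted_wrt_nth_less[OF U(5), of k "n - 1"] n2 U(4) unfolding \<mu>_def by simp
    qed
  qed
  have A00: "Am 0 0 = 0"
    unfolding Am_def using n2 Aent[of 0 0] sg unfolding simple_graph_def by simp
  have mun: "\<mu> (n - 1) \<le> 0"
    by (rule min_eig_nonpos[OF U(2) spec _ A00 mn]) (use n2 in simp)
  define T where "T = {k. k < n \<and> \<mu> k = \<mu> (n - 1)}"
  have g: "count_list mus (mus ! (n - 1)) = card T"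
  proof -
    have "count_list mus (mus ! (n - 1)) = card {i. i < length mus \<and> mus ! (n - 1) = mus ! i}"
      by (simp add: count_list_eq_length_filter length_filter_conv_card)
    also have "{i. i < length mus \<and> mus ! (n - 1) = mus ! i} = T"
      unfolding T_def \<mu>_def using U(4) by auto
    finally show ?thesis .
  qed
  have col: "quantum_colorable n E n" by (rule colorable_n[OF sg])
  define c where "c = quantum_chromatic_number n E"
  have "quantum_colorable n E c"
    unfolding c_def quantum_chromatic_number_def by (rule LeastI[of _ n]) (rule col)
  then obtain d P where d: "d > 0" and qc: "quantum_coloring n E c d P"
    unfolding quantum_colorable_def by blast
  define p where "p = (\<lambda>v k i j. P v k $$ (i,j))"
  have proj: "\<forall>v<n. \<forall>k<c. orth_projector d (P v k)" using qc unfolding quantum_coloring_def by blast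
  have herm: "\<forall>v<n. \<forall>k<c. \<forall>i<d. \<forall>l<d. cnj (p v k i l) = p v k l i"
  proof (intro allI impI)
    fix v k i l assume h: "v < n" "k < c" "i < d" "l < d"
    then have pr: "P v k \<in> carrier_mat d d" "mat_adjoint (P v k) = P v k"
      using proj unfolding orth_projector_def by auto
    have "mat_adjoint (P v k) $$ (l,i) = cnj (P v k $$ (i,l))"
      by (rule adjoint_entry[OF pr(1)]) (use h in auto)
    then show "cnj (p v k i l) = p v k l i" using pr(2) unfolding p_def by simp
  qed
  have idem: "\<forall>v<n. \<forall>k<c. \<forall>l<d. \<forall>m<d. (\<Sum>i<d. p v k l i * p v k i m) = p v k l m"
  proof (intro allI impI)
    fix v k l m assume h: "v < n" "k < c" "l < d" "m < d"
    then have pr: "P v k \<in> carrier_mat d d" "P v k * P v k = P v k"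
      using proj unfolding orth_projector_def by auto
    have "(P v k * P v k) $$ (l,m) = (\<Sum>i<d. p v k l i * p v k i m)"
      using pr(1) h unfolding p_def by (simp add: scalar_prod_def atLeast0LessThan)
    then show "(\<Sum>i<d. p v k l i * p v k i m) = p v k l m" using pr(2) unfolding p_def by simp
  qed
  have sum1: "\<forall>v<n. \<forall>l<d. \<forall>m<d. (\<Sum>k<c. p v k l m) = (if l = m then 1 else 0)"
    using qc unfolding quantum_coloring_def p_def by blast
  have orthp: "\<forall>v<n. \<forall>w<n. Am v w \<noteq> 0 \<longrightarrow> (\<forall>k<c. \<forall>l<d. \<forall>m<d. (\<Sum>i<d. p v k l i * p w k i m) = 0)"
  proof (intro allI impI)
    fix v w k l m assume h: "v < n" "w < n" "Am v w \<noteq> 0" "k < c" "l < d" "m < d"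
    then have e: "E v w" unfolding Am_def using Aent by (auto split: if_splits)
    then have z: "P v k * P w k = 0\<^sub>m d d" using qc h unfolding quantum_coloring_def by blast
    have pr: "P v k \<in> carrier_mat d d" "P w k \<in> carrier_mat d d"
      using proj h unfolding orth_projector_def by auto
    have "(P v k * P w k) $$ (l,m) = (\<Sum>i<d. p v k l i * p w k i m)"
      using pr h unfolding p_def by (simp add: scalar_prod_def atLeast0LessThan)
    then show "(\<Sum>i<d. p v k l i * p w k i m) = 0" using z h by simp
  qed
  have c1: "c \<ge> 1"
  proof (rule ccontr)
    assume "\<not> c \<ge> 1"
    then have "c = 0" by simp
    have "(\<Sum>k<c. p 0 k 0 0) = (if (0::nat) = 0 then 1 else 0)" using sum1 n2 d by auto
    then show False using \<open>c = 0\<close> by simp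
  qed
  have Tne: "n - 1 \<in> T" unfolding T_def using n2 by simp
  have fT: "finite T" unfolding T_def by simp
  have cardT: "card T \<ge> 1" using Tne fT by (metis One_nat_def Suc_leI card_gt_0_iff empty_iff)
  show ?thesis
  proof (cases "card T \<le> c - 1")
    case True
    then have "real c \<ge> 1 + real (card T)" using c1 by linarith
    then show ?thesis unfolding c_def[symmetric] A_def[symmetric] mus_def[symmetric] g by linarith
  next
    case False
    then have gc: "c - 1 < card T" by simp
    have cb: "- \<mu> (n - 1) \<le> real (c - 1) * \<mu> 1"
      by (rule core_bound[OF U(1) U(2) spec mono1 T_def gc c1 d herm idem sum1 orthp])
    have m1: "\<mu> 1 > 0" using mu2pos unfolding \<mu>_def mus_def A_def .
    have ab: "\<bar>\<mu> (n - 1)\<bar> = - \<mu> (n - 1)" using mun by simp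
    have "(- \<mu> (n - 1)) / \<mu> 1 \<le> real (c - 1)"
      by (subst pos_divide_le_eq[OF m1]) (rule cb)
    then have "\<bar>\<mu> (n - 1)\<bar> / \<mu> 1 \<le> real (c - 1)" by (simp only: ab)
    then have "real c \<ge> 1 + \<bar>\<mu> (n - 1)\<bar> / \<mu> 1" using c1 by linarith
    then show ?thesis unfolding c_def[symmetric] A_def[symmetric] mus_def[symmetric] \<mu>_def by linarith
  qed
qed


end
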